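(* The Clebsch graph has odd girth $5$, and it admits an orientation in which every $5$-cycle is alternating.
   Context: The Clebsch graph (Greenwood–Gleason graph) is the $5$-regular graph on vertex set $\{0,1\}^4$ in which two vectors are adjacent iff they differ in exactly one coordinate or in all four coordinates. The odd girth is the length of a shortest odd cycle. An orientation assigns each edge exactly one direction. In an oriented graph, a subgraph that is a cycle is called alternating if at most one of its vertices has both positive in-degree and positive out-degree within that cycle. *)

theory Defs
  imports Main
begin

definition clebsch_vertices :: "bool list set" where
  "clebsch_vertices = {v. length v = 4}"

definition clebsch_adj :: "bool list \<Rightarrow> bool list \<Rightarrow> bool" where
  "clebsch_adj u v \<longleftrightarrow> u \<in> clebsch_vertices \<and> v \<in> clebsch_vertices \<and>
     (card {i. i < 4 \<and> u ! i \<noteq> v ! i} = 1 \<or> card {i. i < 4 \<and> u ! i \<noteq> v ! i} = 4)"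

definition is_cycle :: "'a set \<Rightarrow> ('a \<Rightarrow> 'a \<Rightarrow> bool) \<Rightarrow> 'a list \<Rightarrow> bool" where
  "is_cycle V E c \<longleftrightarrow> length c \<ge> 3 \<and> distinct c \<and> set c \<subseteq> V \<and>
     (\<forall>i < length c. E (c ! i) (c ! ((i + 1) mod length c)))"

definition has_odd_cycle :: "'a set \<Rightarrow> ('a \<Rightarrow> 'a \<Rightarrow> bool) \<Rightarrow> bool" where
  "has_odd_cycle V E \<longleftrightarrow> (\<exists>c. is_cycle V E c \<and> odd (length c))"

text \<open>Odd girth: the length of a shortest odd cycle (meaningful when an odd cycle exists).\<close>
definition odd_girth :: "'a set \<Rightarrow> ('a \<Rightarrow> 'a \<Rightarrow> bool) \<Rightarrow> nat" where
  "odd_girth V E = (LEAST k. odd k \<and> (\<exists>c. is_cycle V E c \<and> length c = k))"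

definition is_orientation :: "'a set \<Rightarrow> ('a \<Rightarrow> 'a \<Rightarrow> bool) \<Rightarrow> ('a \<Rightarrow> 'a \<Rightarrow> bool) \<Rightarrow> bool" where
  "is_orientation V E D \<longleftrightarrow>
     (\<forall>u v. D u v \<longrightarrow> E u v) \<and>
     (\<forall>u\<in>V. \<forall>v\<in>V. E u v \<longrightarrow> (D u v \<noteq> D v u))"

definition cyc_in :: "('a \<Rightarrow> 'a \<Rightarrow> bool) \<Rightarrow> 'a list \<Rightarrow> nat \<Rightarrow> bool" where
  "cyc_in D c i \<longleftrightarrow> (let n = length c in
     D (c ! ((i + n - 1) mod n)) (c ! i) \<or> D (c ! ((i + 1) mod n)) (c ! i))"

definition cyc_out :: "('a \<Rightarrow> 'a \<Rightarrow> bool) \<Rightarrow> 'a list \<Rightarrow> nat \<Rightarrow> bool" where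
  "cyc_out D c i \<longleftrightarrow> (let n = length c in
     D (c ! i) (c ! ((i + n - 1) mod n)) \<or> D (c ! i) (c ! ((i + 1) mod n)))"

definition alternating :: "('a \<Rightarrow> 'a \<Rightarrow> bool) \<Rightarrow> 'a list \<Rightarrow> bool" where
  "alternating D c \<longleftrightarrow> card {i. i < length c \<and> cyc_in D c i \<and> cyc_out D c i} \<le> 1"

end

theory Submission imports Defs begin

fun hd4 :: "bool list \<Rightarrow> bool list \<Rightarrow> nat" where
  "hd4 [a,b,c,d] [e,f,g,h] = (if a = e then 0 else 1) + (if b = f then 0 else 1) + (if c = g then 0 else 1) + (if d = h then 0 else 1)"
| "hd4 _ _ = 0"

definition adjc :: "bool list \<Rightarrow> bool list \<Rightarrow> bool" where
  "adjc u v = (hd4 u v = 1 \<or> hd4 u v = 4)"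

fun par :: "bool list \<Rightarrow> bool" where
  "par [a,b,c,d] = (a = (b = (c = d)))"
| "par _ = False"

definition orient :: "bool list \<Rightarrow> bool list \<Rightarrow> bool" where
  "orient u v = (if hd4 u v = 1 then par u else \<not> u!0)"

definition Dc :: "bool list \<Rightarrow> bool list \<Rightarrow> bool" where
  "Dc u v = (length u = 4 \<and> length v = 4 \<and> adjc u v \<and> orient u v)"

fun nbx :: "bool list \<Rightarrow> bool list list" where
  "nbx [a,b,c,d] = [[\<not>a,b,c,d],[a,\<not>b,c,d],[a,b,\<not>c,d],[a,b,c,\<not>d],[\<not>a,\<not>b,\<not>c,\<not>d]]"
| "nbx _ = []"

definition tr :: "bool list \<Rightarrow> bool list \<Rightarrow> bool list \<Rightarrow> bool" where
  "tr x y z = ((Dc x y \<or> Dc z y) \<and> (Dc y x \<or> Dc y z))"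

definition alt5 :: "bool list \<Rightarrow> bool list \<Rightarrow> bool list \<Rightarrow> bool list \<Rightarrow> bool list \<Rightarrow> bool" where
  "alt5 a b c d e = (length (filter id [tr e a b, tr a b c, tr b c d, tr c d e, tr d e a]) \<le> 1)"

definition chk :: "bool list \<Rightarrow> bool" where
  "chk a = list_all (\<lambda>b. list_all (\<lambda>c. list_all (\<lambda>d. list_all (\<lambda>e.
     if adjc e a \<and> distinct [a,b,c,d,e] then alt5 a b c d e else True) (nbx d)) (nbx c)) (nbx b)) (nbx a)"

lemma card_filter_upt: "card {i. i < n \<and> P i} = length (filter P [0..<n])"
proof -
  have "{i. i < n \<and> P i} = set (filter P [0..<n])" by auto
  then show ?thesis by (metis distinct_card distinct_filter distinct_upt)
qed

lemma upt4: "[0..<4] = [0,1,2,3::nat]" by (simp add: upt_rec)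
lemma upt5: "[0..<5] = [0,1,2,3,4::nat]" by (simp add: upt_rec)

lemma all_less_5: "(\<forall>i<(5::nat). P i) \<longleftrightarrow> P 0 \<and> P 1 \<and> P 2 \<and> P 3 \<and> P 4"
  by (auto simp: numeral_eq_Suc less_Suc_eq)
lemma all_Suc: "(\<forall>i<Suc n. P i) \<longleftrightarrow> P 0 \<and> (\<forall>i<n. P (Suc i))"
  by (auto simp: less_Suc_eq_0_disj)
lemma all_less_3: "(\<forall>i<(3::nat). P i) \<longleftrightarrow> P 0 \<and> P 1 \<and> P 2"
  by (auto simp: numeral_eq_Suc less_Suc_eq)

lemma len4: "length v = 4 \<longleftrightarrow> (\<exists>a b c d. v = [a,b,c,d])"
  by (auto simp: numeral_eq_Suc length_Suc_conv)

lemma vert: "v \<in> clebsch_vertices \<longleftrightarrow> length v = 4"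
  by (simp add: clebsch_vertices_def)

lemma adj_eq: "clebsch_adj u v \<longleftrightarrow> length u = 4 \<and> length v = 4 \<and> adjc u v"
proof (cases "length u = 4 \<and> length v = 4")
  case True
  then obtain a b c d e f g h where "u = [a,b,c,d]" "v = [e,f,g,h]" by (auto simp: len4)
  then show ?thesis
    by (simp add: clebsch_adj_def vert adjc_def card_filter_upt upt4)
next
  case False
  then show ?thesis by (auto simp: clebsch_adj_def vert)
qed

lemma adj_nbx: "length u = 4 \<Longrightarrow> length v = 4 \<Longrightarrow> adjc u v \<Longrightarrow> v \<in> set (nbx u)"
  apply (clarsimp simp: len4)
  subgoal for a b c d e f g h
    by (cases a; cases b; cases c; cases d; cases e; cases f; cases g; cases h; simp add: adjc_def)
  done

definition allV :: "bool list list" where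
  "allV = [[a,b,c,d]. a <- [False,True], b <- [False,True], c <- [False,True], d <- [False,True]]"

lemma allV: "length v = 4 \<Longrightarrow> v \<in> set allV"
  apply (clarsimp simp: len4)
  subgoal for a b c d
    by (cases a; cases b; cases c; cases d; simp add: allV_def)
  done

lemma chk_allV: "list_all chk allV"
  by code_simp

lemma chk_all: "length a = 4 \<Longrightarrow> chk a"
  using allV chk_allV by (auto simp: list_all_iff)

lemma alt_eq: "alternating Dc [a,b,c,d,e] \<longleftrightarrow> alt5 a b c d e"
proof -
  have "length (filter P [0,1,2,3,4::nat]) = length (filter id [P 0, P 1, P 2, P 3, P 4])" for P
    by simp
  then show ?thesis
    unfolding alternating_def card_filter_upt alt5_def
    by (simp add: upt5 cyc_in_def cyc_out_def tr_def)
qed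

lemma len5: "length xs = 5 \<Longrightarrow> \<exists>a b c d e. xs = [a,b,c,d,e]"
  by (auto simp: numeral_eq_Suc length_Suc_conv)
lemma len3: "length xs = 3 \<Longrightarrow> \<exists>a b c. xs = [a,b,c]"
  by (auto simp: numeral_eq_Suc length_Suc_conv)

lemma cyc5:
  assumes "is_cycle clebsch_vertices clebsch_adj xs" "length xs = 5"
  shows "alternating Dc xs"
proof -
  obtain a b c d e where xs: "xs = [a,b,c,d,e]" using len5[OF assms(2)] by blast
  have h: "length a = 4" "length b = 4" "length c = 4" "length d = 4" "length e = 4"
    "adjc a b" "adjc b c" "adjc c d" "adjc d e" "adjc e a" "distinct [a,b,c,d,e]"
    using assms(1) by (simp_all add: is_cycle_def xs all_Suc adj_eq vert)
  have "b \<in> set (nbx a)" "c \<in> set (nbx b)" "d \<in> set (nbx c)" "e \<in> set (nbx d)"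
    using h adj_nbx by auto
  moreover have "chk a" using h chk_all by auto
  ultimately have "alt5 a b c d e" using h unfolding chk_def list_all_iff by fastforce
  then show ?thesis using xs alt_eq by simp
qed

lemma no3:
  assumes "is_cycle clebsch_vertices clebsch_adj xs" "length xs = 3"
  shows False
proof -
  obtain a b c where xs: "xs = [a,b,c]" using len3[OF assms(2)] by blast
  have h: "length a = 4" "length b = 4" "length c = 4"
    "adjc a b" "adjc b c" "adjc c a"
    using assms(1) by (simp_all add: is_cycle_def xs all_Suc adj_eq vert)
  have "b \<in> set (nbx a)" "c \<in> set (nbx b)"
    using h adj_nbx by auto
  then show False using h(1) h(6) by (auto simp: len4 adjc_def)
qed

lemma orient_ok: "is_orientation clebsch_vertices clebsch_adj Dc"
  unfolding is_orientation_def
proof (intro conjI ballI allI impI)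
  fix u v assume "Dc u v" then show "clebsch_adj u v" by (simp add: Dc_def adj_eq)
next
  fix u v assume "u \<in> clebsch_vertices" "v \<in> clebsch_vertices" "clebsch_adj u v"
  then obtain a b c d e f g h where "u = [a,b,c,d]" "v = [e,f,g,h]" "adjc u v"
    by (auto simp: vert len4 adj_eq)
  then show "Dc u v \<noteq> Dc v u"
    by (cases a; cases b; cases c; cases d; cases e; cases f; cases g; cases h;
        simp add: Dc_def adjc_def orient_def)
qed

lemma cyc_ex: "is_cycle clebsch_vertices clebsch_adj
   [[False,False,False,False],[True,False,False,False],[True,True,False,False],[True,True,True,False],[True,True,True,True]]"
  by (simp add: is_cycle_def all_Suc adj_eq vert adjc_def)

theorem mainTheorem12:
  shows "has_odd_cycle clebsch_vertices clebsch_adj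
       \<and> odd_girth clebsch_vertices clebsch_adj = 5
       \<and> (\<exists>D. is_orientation clebsch_vertices clebsch_adj D \<and>
              (\<forall>c. is_cycle clebsch_vertices clebsch_adj c \<and> length c = 5 \<longrightarrow> alternating D c))"
proof (intro conjI)
  show "has_odd_cycle clebsch_vertices clebsch_adj"
    unfolding has_odd_cycle_def using cyc_ex by fastforce
  show "odd_girth clebsch_vertices clebsch_adj = 5"
    unfolding odd_girth_def
  proof (rule Least_equality)
    show "odd (5::nat) \<and> (\<exists>c. is_cycle clebsch_vertices clebsch_adj c \<and> length c = 5)"
      using cyc_ex by fastforce
  next
    fix y :: nat assume "odd y \<and> (\<exists>c. is_cycle clebsch_vertices clebsch_adj c \<and> length c = y)"
    then obtain xs where y: "odd y" "is_cycle clebsch_vertices clebsch_adj xs" "length xs = y" by blast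
    then have "y \<ge> 3" by (auto simp: is_cycle_def)
    moreover have "y \<noteq> 3" using no3 y by blast
    moreover have "y \<noteq> 4" using y by auto
    ultimately show "5 \<le> y" by linarith
  qed
  show "\<exists>D. is_orientation clebsch_vertices clebsch_adj D \<and>
              (\<forall>c. is_cycle clebsch_vertices clebsch_adj c \<and> length c = 5 \<longrightarrow> alternating D c)"
    using orient_ok cyc5 by blast
qed

end
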